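(* Let $v\ge 2$ and $1\le s<t\le k$ be integers such that every prime divisor of $v$ is at least $k$. Then there exists an AOA$(s,t,k,v)$.
   Context: An orthogonal array OA$(t,k,v)$ (with $1\le t\le k$) is a $v^t\times k$ array with entries from a set $X$ of size $v$ such that, for every choice of $t$ of its columns, each $t$-tuple in $X^t$ appears exactly once as a row of the corresponding $v^t\times t$ subarray. For integers $1\le s\le t\le k$, an augmented orthogonal array AOA$(s,t,k,v)$ is a $v^t\times(k+1)$ array $A$ such that: (1) the first $k$ columns of $A$ form an OA$(t,k,v)$ on a symbol set $X$ of size $v$; (2) the last column of $A$ has entries from a set $Y$ of size $v^{t-s}$; (3) for any choice of $s$ of the first $k$ columns, these $s$ columns together with the last column contain every $(s+1)$-tuple of $X^s\times Y$ exactly once as a row. *)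

theory Defs
  imports Main "HOL-Library.FuncSet" "HOL-Computational_Algebra.Primes"
begin

text \<open>An array with R rows and c columns is a function A :: nat => nat => 'a,
  where A i j is the entry in row i < R and column j < c.\<close>

definition is_OA :: "nat \<Rightarrow> nat \<Rightarrow> nat \<Rightarrow> 'a set \<Rightarrow> (nat \<Rightarrow> nat \<Rightarrow> 'a) \<Rightarrow> bool" where
  "is_OA t k v X A \<longleftrightarrow>
     1 \<le> t \<and> t \<le> k \<and> finite X \<and> card X = v \<and>
     (\<forall>i < v ^ t. \<forall>j < k. A i j \<in> X) \<and>
     (\<forall>S. S \<subseteq> {..<k} \<and> card S = t \<longrightarrow>
        bij_betw (\<lambda>i. restrict (A i) S) {..<v ^ t} (S \<rightarrow>\<^sub>E X))"

definition is_AOA :: "nat \<Rightarrow> nat \<Rightarrow> nat \<Rightarrow> nat \<Rightarrow> 'a set \<Rightarrow> 'a set \<Rightarrow> (nat \<Rightarrow> nat \<Rightarrow> 'a) \<Rightarrow> bool" where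
  "is_AOA s t k v X Y A \<longleftrightarrow>
     1 \<le> s \<and> s \<le> t \<and>
     is_OA t k v X A \<and>
     finite Y \<and> card Y = v ^ (t - s) \<and>
     (\<forall>i < v ^ t. A i k \<in> Y) \<and>
     (\<forall>S. S \<subseteq> {..<k} \<and> card S = s \<longrightarrow>
        bij_betw (\<lambda>i. (restrict (A i) S, A i k)) {..<v ^ t} ((S \<rightarrow>\<^sub>E X) \<times> Y))"

end

theory Submission
  imports Defs "HOL-Computational_Algebra.Polynomial"
begin

lemma vanish:
  fixes p :: "int poly" and v :: int
  assumes "\<forall>i \<ge> length xs. coeff p i = 0" "distinct xs"
    "\<forall>a\<in>set xs. \<forall>b\<in>set xs. a \<noteq> b \<longrightarrow> coprime (a - b) v"
    "\<forall>x\<in>set xs. v dvd poly p x"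
  shows "v dvd coeff p i"
  using assms
proof (induction xs arbitrary: p i)
  case Nil
  then show ?case by simp
next
  case (Cons a xs)
  define q where "q = synthetic_div p a"
  have eq: "[:-a, 1:] * q + [:poly p a:] = p" unfolding q_def by (rule synthetic_div_correct')
  have qc: "\<forall>i \<ge> length xs. coeff q i = 0"
  proof (intro allI impI)
    fix i assume "i \<ge> length xs"
    then have "\<forall>j \<ge> Suc i. coeff p j = 0" using Cons.prems(1) by auto
    then have "degree p \<le> i" by (intro degree_le) (auto simp: Suc_le_eq)
    then show "coeff q i = 0"
      proof (cases "degree p = 0")
      case True
      then have "synthetic_div p a = 0" using synthetic_div_eq_0_iff by blast
      then show ?thesis by (simp add: q_def)
    next
      case False
      then show ?thesis using \<open>degree p \<le> i\<close>
        by (auto simp: q_def degree_synthetic_div intro!: coeff_eq_0)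
    qed
  qed
  have qv: "\<forall>y\<in>set xs. v dvd poly q y"
  proof
    fix y assume y: "y \<in> set xs"
    have "poly p y = (y - a) * poly q y + poly p a"
      using arg_cong[OF eq, of "\<lambda>r. poly r y"] by (simp add: algebra_simps)
    moreover have "v dvd poly p y" "v dvd poly p a" using Cons.prems(4) y by auto
    ultimately have "v dvd (y - a) * poly q y" by (metis add_diff_cancel dvd_diff)
    moreover have "coprime (y - a) v" using Cons.prems(2,3) y by auto
    ultimately show "v dvd poly q y" using coprime_dvd_mult_right_iff
      by (metis coprime_commute coprime_dvd_mult_right_iff)
  qed
  have IH: "\<And>i. v dvd coeff q i"
    using Cons.IH[OF qc _ _ qv] Cons.prems(2,3) by auto
  have pe: "p = smult (-a) q + pCons 0 q + [:poly p a:]"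
    using eq by (simp add: mult_pCons_left)
  show ?case
  proof (cases i)
    case 0
    then show ?thesis using IH[of 0] Cons.prems(4) by (subst pe) simp
  next
    case (Suc j)
    then show ?thesis using IH[of i] IH[of j] by (subst pe) simp
  qed
qed

lemma digits_inj:
  fixes v :: nat
  assumes "v > 0"
  shows "i < v^t \<Longrightarrow> i' < v^t \<Longrightarrow> (\<forall>j<t. i div v^j mod v = i' div v^j mod v) \<Longrightarrow> i = i'"
proof (induction t arbitrary: i i')
  case 0
  then show ?case by simp
next
  case (Suc t)
  have m: "i mod v = i' mod v" using Suc.prems(3)[rule_format, of 0] by simp
  have "i div v < v^t" "i' div v < v^t" using Suc.prems(1,2)
    by (auto simp: less_mult_imp_div_less mult.commute)
  moreover have "\<forall>j<t. i div v div v^j mod v = i' div v div v^j mod v"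
    using Suc.prems(3) by (auto simp: div_mult2_eq[symmetric])
  ultimately have "i div v = i' div v" using Suc.IH by blast
  with m show ?case by (metis div_mult_mod_eq)
qed

lemma coprime_dist:
  fixes a b k v :: nat
  assumes "a < k" "b < k" "a \<noteq> b" "\<forall>p. prime p \<and> p dvd v \<longrightarrow> p \<ge> k"
  shows "coprime (int a - int b) (int v)"
proof -
  define d where "d = nat \<bar>int a - int b\<bar>"
  have d0: "0 < d" "d < k" using assms(1-3) unfolding d_def by auto
  have "coprime d v"
  proof (rule ccontr)
    assume "\<not> coprime d v"
    then have "gcd d v \<noteq> 1" using coprime_iff_gcd_eq_1 by blast
    then obtain p where p: "prime p" "p dvd gcd d v" using prime_factor_nat by blast
    then have "p dvd d" "p dvd v" using dvd_trans gcd_dvd1 gcd_dvd2 by blast+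
    then have "p \<le> d" using d0 dvd_imp_le by blast
    moreover have "p \<ge> k" using assms(4) p(1) \<open>p dvd v\<close> by blast
    ultimately show False using d0 by linarith
  qed
  then have "coprime (int d) (int v)" by simp
  moreover have "int d = \<bar>int a - int b\<bar>" unfolding d_def by simp
  ultimately show ?thesis by simp
qed

definition dg :: "nat \<Rightarrow> nat \<Rightarrow> nat \<Rightarrow> int" where
  "dg v i j = int (i div v^j mod v)"

lemma coeff_monom_sum: "coeff (\<Sum>j<t. monom (c j) j) m = (if m < t then (c m::int) else 0)"
  by (simp add: coeff_sum)
lemma poly_monom_sum: "poly (\<Sum>j<t. monom (c j) j) x = (\<Sum>j<t. (c j::int) * x^j)"
  by (simp add: poly_sum poly_monom)
lemma dg_bounds: "(v::nat) > 0 \<Longrightarrow> 0 \<le> dg v i j \<and> dg v i j < int v"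
  by (auto simp: dg_def)
lemma small_dvd: "\<bar>a\<bar> < (v::int) \<Longrightarrow> v dvd a \<Longrightarrow> a = 0"
  using dvd_imp_le_int[of a v] by fastforce

lemma main_inj:
  fixes v t n :: nat and xs :: "int list"
  assumes v: "v > 0" and i: "i < v^t" "i' < v^t" and n: "length xs = n"
    and dist: "distinct xs"
    and cop: "\<forall>a\<in>set xs. \<forall>b\<in>set xs. a \<noteq> b \<longrightarrow> coprime (a - b) (int v)"
    and dv: "\<forall>x\<in>set xs. int v dvd (\<Sum>j<t. (dg v i j - dg v i' j) * x^j)"
    and hi: "\<forall>j. n \<le> j \<and> j < t \<longrightarrow> dg v i j = dg v i' j"
  shows "i = i'"
proof -
  define c where "c = (\<lambda>j. dg v i j - dg v i' j)"
  define p where "p = (\<Sum>j<t. monom (c j) j)"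
  have pp: "poly p x = (\<Sum>j<t. c j * x^j)" for x
    unfolding p_def by (rule poly_monom_sum)
  have pc: "coeff p j = (if j < t then c j else 0)" for j
    unfolding p_def by (rule coeff_monom_sum)
  have c0: "\<forall>j \<ge> length xs. coeff p j = 0" using hi n unfolding pc c_def by auto
  have pv: "\<forall>x\<in>set xs. int v dvd poly p x" using dv unfolding pp c_def by blast
  have dvc: "int v dvd coeff p j" for j
    by (rule vanish[OF c0 dist cop pv])
  have "\<forall>j<t. dg v i j = dg v i' j"
  proof (intro allI impI)
    fix j assume "j < t"
    with dvc[of j] have dvj: "int v dvd c j" by (simp add: pc)
    have "\<bar>c j\<bar> < int v" using dg_bounds[OF v, of i j] dg_bounds[OF v, of i' j]
      unfolding c_def by linarith
    then have "c j = 0" using dvj small_dvd by blast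
    then show "dg v i j = dg v i' j" unfolding c_def by simp
  qed
  then have "\<forall>j<t. i div v^j mod v = i' div v^j mod v" unfolding dg_def by simp
  then show ?thesis using digits_inj[OF v i] by blast
qed


lemma bij_from_inj:
  assumes "inj_on f A" "f ` A \<subseteq> B" "finite B" "card A = card B"
  shows "bij_betw f A B"
proof -
  have "card (f ` A) = card B" using assms(1,4) card_image by metis
  then have "f ` A = B" using card_subset_eq[OF assms(3,2)] by blast
  then show ?thesis using assms(1) unfolding bij_betw_def by blast
qed

definition arr :: "nat \<Rightarrow> nat \<Rightarrow> nat \<Rightarrow> nat \<Rightarrow> nat \<Rightarrow> nat \<Rightarrow> nat" where
  "arr v t s k i col = (if col < k then nat ((\<Sum>j<t. dg v i j * int col ^ j) mod int v)
     else i div v^s)"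

lemma arr_lt: "v > 0 \<Longrightarrow> col < k \<Longrightarrow> arr v t s k i col < v"
  unfolding arr_def by (simp add: nat_less_iff)

lemma arr_dvd:
  assumes v: "v > 0" and col: "col < k" and eq: "arr v t s k i col = arr v t s k i' col"
  shows "int v dvd (\<Sum>j<t. (dg v i j - dg v i' j) * int col ^ j)"
proof -
  define a where "a = (\<Sum>j<t. dg v i j * int col ^ j)"
  define b where "b = (\<Sum>j<t. dg v i' j * int col ^ j)"
  have "nat (a mod int v) = nat (b mod int v)" using eq col unfolding arr_def a_def b_def by simp
  moreover have "a mod int v \<ge> 0" "b mod int v \<ge> 0" using v by auto
  ultimately have "a mod int v = b mod int v" by simp
  then have "int v dvd a - b" by (simp add: mod_eq_dvd_iff)
  moreover have "a - b = (\<Sum>j<t. (dg v i j - dg v i' j) * int col ^ j)"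
    unfolding a_def b_def by (simp add: sum_subtractf left_diff_distrib)
  ultimately show ?thesis by simp
qed

lemma inj_cols:
  fixes v t s k n :: nat
  assumes v: "v > 0" and kv: "\<forall>p. prime p \<and> p dvd v \<longrightarrow> p \<ge> k"
    and S: "S \<subseteq> {..<k}" "card S = n"
    and i: "i < v^t" "i' < v^t"
    and eq: "\<forall>col\<in>S. arr v t s k i col = arr v t s k i' col"
    and hi: "\<forall>j. n \<le> j \<and> j < t \<longrightarrow> dg v i j = dg v i' j"
  shows "i = i'"
proof -
  have fS: "finite S" using S(1) finite_subset by blast
  define xs where "xs = map int (sorted_list_of_set S)"
  have len: "length xs = n" unfolding xs_def using S(2) by simp
  have setxs: "set xs = int ` S" unfolding xs_def using fS by simp
  have dist: "distinct xs" unfolding xs_def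
    by (simp add: distinct_map inj_on_def)
  have cop: "\<forall>a\<in>set xs. \<forall>b\<in>set xs. a \<noteq> b \<longrightarrow> coprime (a - b) (int v)"
    unfolding setxs using coprime_dist[OF _ _ _ kv] S(1) by blast
  have dv: "\<forall>x\<in>set xs. int v dvd (\<Sum>j<t. (dg v i j - dg v i' j) * x^j)"
    unfolding setxs using arr_dvd[OF v] eq S(1) by blast
  show ?thesis by (rule main_inj[OF v i len dist cop dv hi])
qed

lemma hi_digits:
  assumes "i div v^s = i' div (v::nat)^s" "s \<le> j"
  shows "dg v i j = dg v i' j"
proof -
  have "v^j = v^s * v^(j-s)" using assms(2) by (simp add: power_add[symmetric])
  then show ?thesis unfolding dg_def using assms(1) by (simp add: div_mult2_eq)
qed

theorem theorem2p2:
  fixes v s t k :: nat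
  assumes "v \<ge> 2" and "1 \<le> s" and "s < t" and "t \<le> k"
    and "\<forall>p. prime p \<and> p dvd v \<longrightarrow> p \<ge> k"
  shows "\<exists>(X :: nat set) (Y :: nat set) (A :: nat \<Rightarrow> nat \<Rightarrow> nat). is_AOA s t k v X Y A"
proof -
  have v: "v > 0" using assms(1) by simp
  define A where "A = arr v t s k"
  define X where "X = {..<v}"
  define Y where "Y = {..<v^(t-s)}"
  have vt: "v^t = v^s * v^(t-s)" using assms(3) by (simp add: power_add[symmetric])
  have OA: "is_OA t k v X A"
    unfolding is_OA_def
  proof (intro conjI allI impI)
    show "1 \<le> t" "t \<le> k" using assms by auto
    show "finite X" "card X = v" unfolding X_def by auto
    show "A i j \<in> X" if "i < v^t" "j < k" for i j
      unfolding A_def X_def using arr_lt[OF v that(2)] by simp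
    fix S assume S: "S \<subseteq> {..<k} \<and> card S = t"
    have fS: "finite S" using S finite_subset by blast
    show "bij_betw (\<lambda>i. restrict (A i) S) {..<v ^ t} (S \<rightarrow>\<^sub>E X)"
    proof (rule bij_from_inj)
      show "inj_on (\<lambda>i. restrict (A i) S) {..<v ^ t}"
      proof (rule inj_onI)
        fix i i' assume i: "i \<in> {..<v^t}" "i' \<in> {..<v^t}"
          and e: "restrict (A i) S = restrict (A i') S"
        have "\<forall>col\<in>S. arr v t s k i col = arr v t s k i' col"
          using e unfolding A_def by (metis restrict_apply')
        then show "i = i'" using inj_cols[OF v assms(5), where S=S and n=t and t=t and i=i and i'=i' and s=s] S i by auto
      qed
      show "(\<lambda>i. restrict (A i) S) ` {..<v ^ t} \<subseteq> S \<rightarrow>\<^sub>E X"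
        using S arr_lt[OF v] unfolding A_def X_def by auto
      show "finite (S \<rightarrow>\<^sub>E X)" using fS unfolding X_def by (simp add: finite_PiE)
      show "card {..<v ^ t} = card (S \<rightarrow>\<^sub>E X)"
        using fS S unfolding X_def by (simp add: card_PiE)
    qed
  qed
  have AOA: "\<forall>S. S \<subseteq> {..<k} \<and> card S = s \<longrightarrow>
        bij_betw (\<lambda>i. (restrict (A i) S, A i k)) {..<v ^ t} ((S \<rightarrow>\<^sub>E X) \<times> Y)"
  proof (intro allI impI)
    fix S assume S: "S \<subseteq> {..<k} \<and> card S = s"
    have fS: "finite S" using S finite_subset by blast
    show "bij_betw (\<lambda>i. (restrict (A i) S, A i k)) {..<v ^ t} ((S \<rightarrow>\<^sub>E X) \<times> Y)"
    proof (rule bij_from_inj)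
      show "inj_on (\<lambda>i. (restrict (A i) S, A i k)) {..<v ^ t}"
      proof (rule inj_onI)
        fix i i' assume i: "i \<in> {..<v^t}" "i' \<in> {..<v^t}"
          and e: "(restrict (A i) S, A i k) = (restrict (A i') S, A i' k)"
        have "\<forall>col\<in>S. arr v t s k i col = arr v t s k i' col"
          using e unfolding A_def by (metis prod.inject restrict_apply')
        moreover have "i div v^s = i' div v^s" using e unfolding A_def arr_def by simp
        then have "\<forall>j. s \<le> j \<and> j < t \<longrightarrow> dg v i j = dg v i' j"
          using hi_digits by blast
        ultimately show "i = i'" using inj_cols[OF v assms(5), where S=S and n=s and t=t and i=i and i'=i' and s=s] S i by auto
      qed
      show "(\<lambda>i. (restrict (A i) S, A i k)) ` {..<v ^ t} \<subseteq> (S \<rightarrow>\<^sub>E X) \<times> Y"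
      proof
        fix z assume "z \<in> (\<lambda>i. (restrict (A i) S, A i k)) ` {..<v ^ t}"
        then obtain i where i: "i < v^t" and z: "z = (restrict (A i) S, A i k)" by auto
        have "A i k < v^(t-s)" unfolding A_def arr_def using i vt
          by (simp add: less_mult_imp_div_less mult.commute)
        then show "z \<in> (S \<rightarrow>\<^sub>E X) \<times> Y"
          using z S arr_lt[OF v] unfolding A_def X_def Y_def by auto
      qed
      show "finite ((S \<rightarrow>\<^sub>E X) \<times> Y)" using fS unfolding X_def Y_def by (simp add: finite_PiE)
      show "card {..<v ^ t} = card ((S \<rightarrow>\<^sub>E X) \<times> Y)"
        using fS S vt unfolding X_def Y_def by (simp add: card_PiE card_cartesian_product)
    qed
  qed
  have "is_AOA s t k v X Y A"
    unfolding is_AOA_def using OA AOA assms(2,3) A_def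
    by (auto simp: Y_def A_def arr_def less_mult_imp_div_less vt mult.commute)
  then show ?thesis by blast
qed

end
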